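(* In the affine Schur category $\mathcal{AS}$ over a commutative ring $\Bbbk$, for all integers $a\ge1$, $0\le r\le a$ and all $u\in\Bbbk$: $$U_{a,u}\circ(\omega_{a,r}\otimes 1_u)=(1_u\otimes\omega_{a,r})\circ U_{a,u},\qquad D_{u,a}\circ(1_u\otimes\omega_{a,r})=(\omega_{a,r}\otimes1_u)\circ D_{u,a}.$$
   Context: Let $\Bbbk$ be a commutative ring with $1$. The affine Schur category $\mathcal{AS}$ is the strict $\Bbbk$-linear monoidal category defined as follows. Generating objects: the integers $a\ge1$ (black strands of thickness $a$) and the elements $u\in\Bbbk$ (red strands labelled $u$); objects are finite words in these, tensor product being concatenation, written $(x_1,\dots,x_k)$ or $x_1\otimes\cdots\otimes x_k$. Generating morphisms, for $a,b\ge1$, $u\in\Bbbk$: merge $M_{a,b}:(a,b)\to(a+b)$, split $S_{a,b}:(a+b)\to(a,b)$, crossing $X_{a,b}:(a,b)\to(b,a)$, dot $\omega_a:(a)\to(a)$, traverse-up $U_{a,u}:(a,u)\to(u,a)$, traverse-down $D_{u,a}:(u,a)\to(a,u)$. Conventions: a black strand of thickness $0$ is the unit object and any merge, split or crossing involving a thickness-$0$ strand is an identity; $1_x$ is an identity. Derived morphisms: $\omega_{a,0}:=1_a$; $\omega_{a,r}:=M_{r,a-r}\circ(\omega_r\otimes1_{a-r})\circ S_{r,a-r}$ for $1\le r\le a$ (so $\omega_{a,a}=\omega_a$); $\omega_{a,r}:=0$ if $r<0$ or $r>a$; $S^{(a)}:(a)\to(1,\dots,1)$ and $M^{(a)}:(1,\dots,1)\to(a)$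 are iterated splits/merges; $g_r(u):=\sum_{i=0}^{r}(-1)^i\big(\prod_{j=0}^{i-1}(u+j)\big)\omega_{r,r-i}\in\mathrm{End}(r)$. Defining relations, for all $a,b,c,d,r\ge1$, $u\in\Bbbk$: (R1) $M_{a+b,c}(M_{a,b}\otimes1_c)=M_{a,b+c}(1_a\otimes M_{b,c})$, $(S_{a,b}\otimes1_c)S_{a+b,c}=(1_a\otimes S_{b,c})S_{a,b+c}$; (R2) if $a+c=b+d$: $S_{b,d}M_{a,c}=\sum(M_{s,c-t}\otimes M_{a-s,t})(1_s\otimes X_{a-s,c-t}\otimes1_t)(S_{s,a-s}\otimes S_{c-t,t})$ over $0\le s\le\min(a,b)$, $0\le t\le\min(c,d)$, $t-s=d-a$; (R3) $M_{a,b}S_{a,b}=\binom{a+b}{a}1_{a+b}$; (R4) $(\omega_b\otimes1_a)X_{a,b}=\sum_{t=0}^{\min(a,b)}t!\,(M_{t,b-t}\otimes M_{a-t,t})(1_t\otimes X_{a-t,b-t}\otimes1_t)(1_t\otimes1_{a-t}\otimes\omega_{b-t}\otimes1_t)(S_{t,a-t}\otimes S_{b-t,t})$ and $X_{b,a}(\omega_b\otimes1_a)=\sum_{t=0}^{\min(a,b)}t!\,(M_{t,a-t}\otimes M_{b-t,t})(1_t\otimes1_{a-t}\otimes\omega_{b-t}\otimes1_t)(1_t\otimes X_{b-t,a-t}\otimes1_t)(S_{t,b-t}\otimes S_{a-t,t})$; (R5) $S_{a,b}\omega_{a+b}=(\omega_a\otimes\omega_b)S_{a,b}$, $\omega_{a+b}M_{a,b}=M_{a,b}(\omega_a\otimes\omega_b)$;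 (R6) $M^{(a)}(\omega_1\otimes\cdots\otimes\omega_1)S^{(a)}=a!\,\omega_a$; (R7) $D_{u,r}U_{r,u}=g_r(u)\otimes1_u$, $U_{r,u}D_{u,r}=1_u\otimes g_r(u)$; (R8) $(D_{u,b}\otimes1_a)(1_u\otimes X_{a,b})(U_{a,u}\otimes1_b)=(1_b\otimes U_{a,u})(X_{a,b}\otimes1_u)(1_a\otimes D_{u,b})+\sum_{t=1}^{\min(a,b)}t!\,(M_{t,b-t}\otimes1_u\otimes M_{a-t,t})(1_t\otimes1_{b-t}\otimes U_{a-t,u}\otimes1_t)(1_t\otimes X_{a-t,b-t}\otimes1_u\otimes1_t)(1_t\otimes1_{a-t}\otimes D_{u,b-t}\otimes1_t)(S_{t,a-t}\otimes1_u\otimes S_{b-t,t})$; (R9) $(1_u\otimes S_{b,c})U_{b+c,u}=(U_{b,u}\otimes1_c)(1_b\otimes U_{c,u})(S_{b,c}\otimes1_u)$, $(S_{a,b}\otimes1_u)D_{u,a+b}=(1_a\otimes D_{u,b})(D_{u,a}\otimes1_b)(1_u\otimes S_{a,b})$, $D_{u,b+c}(1_u\otimes M_{b,c})=(M_{b,c}\otimes1_u)(1_b\otimes D_{u,c})(D_{u,b}\otimes1_c)$, $U_{a+b,u}(M_{a,b}\otimes1_u)=(1_u\otimes M_{a,b})(U_{a,u}\otimes1_b)(1_a\otimes U_{b,u})$. *)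

theory Defs
  imports Main
begin

datatype 'k gob = Blk nat | Red 'k

type_synonym 'k ob = "'k gob list"

definition ok_ob :: "'k ob \<Rightarrow> bool" where
  "ok_ob x \<longleftrightarrow> (\<forall>g\<in>set x. g \<noteq> Blk 0)"

datatype 'k tm =
    Idt "'k ob" | Zer "'k ob" "'k ob"
  | Cmp "'k tm" "'k tm" | Tns "'k tm" "'k tm"
  | Pls "'k tm" "'k tm" | Scl 'k "'k tm"
  | Mg nat nat | Sp nat nat | Cr nat nat | Dt nat
  | Up nat 'k | Dn 'k nat

inductive hty :: "'k tm \<Rightarrow> 'k ob \<Rightarrow> 'k ob \<Rightarrow> bool" where
  "ok_ob x \<Longrightarrow> hty (Idt x) x x"
| "ok_ob x \<Longrightarrow> ok_ob y \<Longrightarrow> hty (Zer x y) x y"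
| "hty g x y \<Longrightarrow> hty f y z \<Longrightarrow> hty (Cmp f g) x z"
| "hty f x y \<Longrightarrow> hty g x' y' \<Longrightarrow> hty (Tns f g) (x @ x') (y @ y')"
| "hty f x y \<Longrightarrow> hty g x y \<Longrightarrow> hty (Pls f g) x y"
| "hty f x y \<Longrightarrow> hty (Scl c f) x y"
| "a \<ge> 1 \<Longrightarrow> b \<ge> 1 \<Longrightarrow> hty (Mg a b) [Blk a, Blk b] [Blk (a+b)]"
| "a \<ge> 1 \<Longrightarrow> b \<ge> 1 \<Longrightarrow> hty (Sp a b) [Blk (a+b)] [Blk a, Blk b]"
| "a \<ge> 1 \<Longrightarrow> b \<ge> 1 \<Longrightarrow> hty (Cr a b) [Blk a, Blk b] [Blk b, Blk a]"
| "a \<ge> 1 \<Longrightarrow> hty (Dt a) [Blk a] [Blk a]"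
| "a \<ge> 1 \<Longrightarrow> hty (Up a u) [Blk a, Red u] [Red u, Blk a]"
| "a \<ge> 1 \<Longrightarrow> hty (Dn u a) [Red u, Blk a] [Blk a, Red u]"

text \<open>Thickness-0 conventions: a black strand of thickness 0 is the unit object;
  merges, splits, crossings, dots and traverses involving it are identities.\<close>
definition blk :: "nat \<Rightarrow> 'k ob" where
  "blk a = (if a = 0 then [] else [Blk a])"
definition idb :: "nat \<Rightarrow> 'k tm" where "idb a = Idt (blk a)"
definition idr :: "'k \<Rightarrow> 'k tm" where "idr u = Idt [Red u]"
definition mg :: "nat \<Rightarrow> nat \<Rightarrow> 'k tm" where
  "mg a b = (if a = 0 \<or> b = 0 then Idt (blk (a+b)) else Mg a b)"
definition sp :: "nat \<Rightarrow> nat \<Rightarrow> 'k tm" where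
  "sp a b = (if a = 0 \<or> b = 0 then Idt (blk (a+b)) else Sp a b)"
definition cr :: "nat \<Rightarrow> nat \<Rightarrow> 'k tm" where
  "cr a b = (if a = 0 \<or> b = 0 then Idt (blk a @ blk b) else Cr a b)"
definition dt :: "nat \<Rightarrow> 'k tm" where
  "dt a = (if a = 0 then Idt [] else Dt a)"
definition up :: "nat \<Rightarrow> 'k \<Rightarrow> 'k tm" where
  "up a u = (if a = 0 then Idt [Red u] else Up a u)"
definition dn :: "'k \<Rightarrow> nat \<Rightarrow> 'k tm" where
  "dn u a = (if a = 0 then Idt [Red u] else Dn u a)"

fun tsum :: "'k ob \<Rightarrow> 'k ob \<Rightarrow> 'k tm list \<Rightarrow> 'k tm" where
  "tsum x y [] = Zer x y"
| "tsum x y (f # fs) = Pls f (tsum x y fs)"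

definition omg :: "nat \<Rightarrow> nat \<Rightarrow> 'k tm" where
  "omg a r = (if r = 0 then idb a
              else if r \<le> a then Cmp (mg r (a-r)) (Cmp (Tns (dt r) (idb (a-r))) (sp r (a-r)))
              else Zer (blk a) (blk a))"

definition gpol :: "nat \<Rightarrow> 'k::comm_ring_1 \<Rightarrow> 'k tm" where
  "gpol r u = tsum (blk r) (blk r)
     [Scl ((-1)^i * (\<Prod>j<i. u + of_nat j)) (omg r (r-i)). i \<leftarrow> [0..<r+1]]"

fun mit :: "nat \<Rightarrow> 'k tm" where
  "mit 0 = Idt []"
| "mit (Suc 0) = Idt [Blk 1]"
| "mit (Suc (Suc n)) = Cmp (Mg (Suc n) 1) (Tns (mit (Suc n)) (Idt [Blk 1]))"

fun sit :: "nat \<Rightarrow> 'k tm" where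
  "sit 0 = Idt []"
| "sit (Suc 0) = Idt [Blk 1]"
| "sit (Suc (Suc n)) = Cmp (Tns (sit (Suc n)) (Idt [Blk 1])) (Sp (Suc n) 1)"

fun dots :: "nat \<Rightarrow> 'k tm" where
  "dots 0 = Idt []"
| "dots (Suc n) = Tns (dots n) (Dt 1)"

text \<open>Axioms (unguarded; they are only used between well-typed terms of equal type).\<close>
inductive ax :: "'k::comm_ring_1 tm \<Rightarrow> 'k tm \<Rightarrow> bool" where
  c_assoc: "ax (Cmp (Cmp f g) h) (Cmp f (Cmp g h))"
| c_idl: "ax (Cmp (Idt y) f) f"
| c_idr: "ax (Cmp f (Idt x)) f"
| t_assoc: "ax (Tns (Tns f g) h) (Tns f (Tns g h))"
| t_unl: "ax (Tns (Idt []) f) f"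
| t_unr: "ax (Tns f (Idt [])) f"
| t_id: "ax (Tns (Idt x) (Idt y)) (Idt (x @ y))"
| t_interchange: "ax (Cmp (Tns f g) (Tns h k)) (Tns (Cmp f h) (Cmp g k))"
| p_assoc: "ax (Pls (Pls f g) h) (Pls f (Pls g h))"
| p_comm: "ax (Pls f g) (Pls g f)"
| p_zero: "ax (Pls f (Zer x y)) f"
| p_neg: "ax (Pls f (Scl (-1) f)) (Zer x y)"
| s_one: "ax (Scl 1 f) f"
| s_mult: "ax (Scl c (Scl d f)) (Scl (c*d) f)"
| s_addl: "ax (Scl (c+d) f) (Pls (Scl c f) (Scl d f))"
| s_addr: "ax (Scl c (Pls f g)) (Pls (Scl c f) (Scl c g))"
| cp_l: "ax (Cmp (Pls f g) h) (Pls (Cmp f h) (Cmp g h))"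
| cp_r: "ax (Cmp h (Pls f g)) (Pls (Cmp h f) (Cmp h g))"
| cs_l: "ax (Cmp (Scl c f) g) (Scl c (Cmp f g))"
| cs_r: "ax (Cmp f (Scl c g)) (Scl c (Cmp f g))"
| tp_l: "ax (Tns (Pls f g) h) (Pls (Tns f h) (Tns g h))"
| tp_r: "ax (Tns h (Pls f g)) (Pls (Tns h f) (Tns h g))"
| ts_l: "ax (Tns (Scl c f) g) (Scl c (Tns f g))"
| ts_r: "ax (Tns f (Scl c g)) (Scl c (Tns f g))"
| R1a: "a \<ge> 1 \<Longrightarrow> b \<ge> 1 \<Longrightarrow> c \<ge> 1 \<Longrightarrow>
    ax (Cmp (Mg (a+b) c) (Tns (Mg a b) (Idt [Blk c])))
       (Cmp (Mg a (b+c)) (Tns (Idt [Blk a]) (Mg b c)))"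
| R1b: "a \<ge> 1 \<Longrightarrow> b \<ge> 1 \<Longrightarrow> c \<ge> 1 \<Longrightarrow>
    ax (Cmp (Tns (Sp a b) (Idt [Blk c])) (Sp (a+b) c))
       (Cmp (Tns (Idt [Blk a]) (Sp b c)) (Sp a (b+c)))"
| R2: "a \<ge> 1 \<Longrightarrow> b \<ge> 1 \<Longrightarrow> c \<ge> 1 \<Longrightarrow> d \<ge> 1 \<Longrightarrow> a + c = b + d \<Longrightarrow>
    ax (Cmp (Sp b d) (Mg a c))
       (tsum [Blk a, Blk c] [Blk b, Blk d]
         [Cmp (Tns (mg s (c-t)) (mg (a-s) t))
              (Cmp (Tns (idb s) (Tns (cr (a-s) (c-t)) (idb t)))
                   (Tns (sp s (a-s)) (sp (c-t) t))).
          s \<leftarrow> [0..<min a b + 1], t \<leftarrow> [0..<min c d + 1],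
          int t - int s = int d - int a])"
| R3: "a \<ge> 1 \<Longrightarrow> b \<ge> 1 \<Longrightarrow>
    ax (Cmp (Mg a b) (Sp a b)) (Scl (of_nat ((a+b) choose a)) (Idt [Blk (a+b)]))"
| R4a: "a \<ge> 1 \<Longrightarrow> b \<ge> 1 \<Longrightarrow>
    ax (Cmp (Tns (Dt b) (Idt [Blk a])) (Cr a b))
       (tsum [Blk a, Blk b] [Blk b, Blk a]
         [Scl (of_nat (fact t))
            (Cmp (Tns (mg t (b-t)) (mg (a-t) t))
            (Cmp (Tns (idb t) (Tns (cr (a-t) (b-t)) (idb t)))
            (Cmp (Tns (idb t) (Tns (idb (a-t)) (Tns (dt (b-t)) (idb t))))
                 (Tns (sp t (a-t)) (sp (b-t) t))))).
          t \<leftarrow> [0..<min a b + 1]])"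
| R4b: "a \<ge> 1 \<Longrightarrow> b \<ge> 1 \<Longrightarrow>
    ax (Cmp (Cr b a) (Tns (Dt b) (Idt [Blk a])))
       (tsum [Blk b, Blk a] [Blk a, Blk b]
         [Scl (of_nat (fact t))
            (Cmp (Tns (mg t (a-t)) (mg (b-t) t))
            (Cmp (Tns (idb t) (Tns (idb (a-t)) (Tns (dt (b-t)) (idb t))))
            (Cmp (Tns (idb t) (Tns (cr (b-t) (a-t)) (idb t)))
                 (Tns (sp t (b-t)) (sp (a-t) t))))).
          t \<leftarrow> [0..<min a b + 1]])"
| R5a: "a \<ge> 1 \<Longrightarrow> b \<ge> 1 \<Longrightarrow>
    ax (Cmp (Sp a b) (Dt (a+b))) (Cmp (Tns (Dt a) (Dt b)) (Sp a b))"
| R5b: "a \<ge> 1 \<Longrightarrow> b \<ge> 1 \<Longrightarrow>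
    ax (Cmp (Dt (a+b)) (Mg a b)) (Cmp (Mg a b) (Tns (Dt a) (Dt b)))"
| R6: "a \<ge> 1 \<Longrightarrow>
    ax (Cmp (mit a) (Cmp (dots a) (sit a))) (Scl (of_nat (fact a)) (Dt a))"
| R7a: "r \<ge> 1 \<Longrightarrow> ax (Cmp (Dn u r) (Up r u)) (Tns (gpol r u) (idr u))"
| R7b: "r \<ge> 1 \<Longrightarrow> ax (Cmp (Up r u) (Dn u r)) (Tns (idr u) (gpol r u))"
| R8: "a \<ge> 1 \<Longrightarrow> b \<ge> 1 \<Longrightarrow>
    ax (Cmp (Tns (Dn u b) (Idt [Blk a]))
        (Cmp (Tns (idr u) (Cr a b)) (Tns (Up a u) (Idt [Blk b]))))
       (Pls (Cmp (Tns (Idt [Blk b]) (Up a u))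
             (Cmp (Tns (Cr a b) (idr u)) (Tns (Idt [Blk a]) (Dn u b))))
          (tsum [Blk a, Red u, Blk b] [Blk b, Red u, Blk a]
            [Scl (of_nat (fact t))
              (Cmp (Tns (mg t (b-t)) (Tns (idr u) (mg (a-t) t)))
              (Cmp (Tns (idb t) (Tns (idb (b-t)) (Tns (up (a-t) u) (idb t))))
              (Cmp (Tns (idb t) (Tns (cr (a-t) (b-t)) (Tns (idr u) (idb t))))
              (Cmp (Tns (idb t) (Tns (idb (a-t)) (Tns (dn u (b-t)) (idb t))))
                   (Tns (sp t (a-t)) (Tns (idr u) (sp (b-t) t))))))).
             t \<leftarrow> [1..<min a b + 1]]))"
| R9a: "b \<ge> 1 \<Longrightarrow> c \<ge> 1 \<Longrightarrow>
    ax (Cmp (Tns (idr u) (Sp b c)) (Up (b+c) u))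
       (Cmp (Tns (Up b u) (Idt [Blk c])) (Cmp (Tns (Idt [Blk b]) (Up c u)) (Tns (Sp b c) (idr u))))"
| R9b: "a \<ge> 1 \<Longrightarrow> b \<ge> 1 \<Longrightarrow>
    ax (Cmp (Tns (Sp a b) (idr u)) (Dn u (a+b)))
       (Cmp (Tns (Idt [Blk a]) (Dn u b)) (Cmp (Tns (Dn u a) (Idt [Blk b])) (Tns (idr u) (Sp a b))))"
| R9c: "b \<ge> 1 \<Longrightarrow> c \<ge> 1 \<Longrightarrow>
    ax (Cmp (Dn u (b+c)) (Tns (idr u) (Mg b c)))
       (Cmp (Tns (Mg b c) (idr u)) (Cmp (Tns (Idt [Blk b]) (Dn u c)) (Tns (Dn u b) (Idt [Blk c]))))"
| R9d: "a \<ge> 1 \<Longrightarrow> b \<ge> 1 \<Longrightarrow>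
    ax (Cmp (Up (a+b) u) (Tns (Mg a b) (idr u)))
       (Cmp (Tns (idr u) (Mg a b)) (Cmp (Tns (Up a u) (Idt [Blk b])) (Tns (Idt [Blk a]) (Up b u))))"

inductive AS_eq :: "'k::comm_ring_1 ob \<Rightarrow> 'k ob \<Rightarrow> 'k tm \<Rightarrow> 'k tm \<Rightarrow> bool" where
  eq_ax: "ax f g \<Longrightarrow> hty f x y \<Longrightarrow> hty g x y \<Longrightarrow> AS_eq x y f g"
| eq_refl: "hty f x y \<Longrightarrow> AS_eq x y f f"
| eq_sym: "AS_eq x y f g \<Longrightarrow> AS_eq x y g f"
| eq_trans: "AS_eq x y f g \<Longrightarrow> AS_eq x y g h \<Longrightarrow> AS_eq x y f h"
| eq_cmp: "AS_eq y z f f' \<Longrightarrow> AS_eq x y g g' \<Longrightarrow> AS_eq x z (Cmp f g) (Cmp f' g')"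
| eq_tns: "AS_eq x y f f' \<Longrightarrow> AS_eq x' y' g g' \<Longrightarrow> AS_eq (x @ x') (y @ y') (Tns f g) (Tns f' g')"
| eq_pls: "AS_eq x y f f' \<Longrightarrow> AS_eq x y g g' \<Longrightarrow> AS_eq x y (Pls f g) (Pls f' g')"
| eq_scl: "AS_eq x y f f' \<Longrightarrow> AS_eq x y (Scl c f) (Scl c f')"

end

theory Submission
  imports Defs
begin

fun src :: "'k tm \<Rightarrow> 'k ob" where
  "src (Idt x) = x" | "src (Zer x y) = x" | "src (Cmp f g) = src g"
| "src (Tns f g) = src f @ src g" | "src (Pls f g) = src f" | "src (Scl c f) = src f"
| "src (Mg a b) = [Blk a, Blk b]" | "src (Sp a b) = [Blk (a+b)]" | "src (Cr a b) = [Blk a, Blk b]"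
| "src (Dt a) = [Blk a]" | "src (Up a u) = [Blk a, Red u]" | "src (Dn u a) = [Red u, Blk a]"

fun tgt :: "'k tm \<Rightarrow> 'k ob" where
  "tgt (Idt x) = x" | "tgt (Zer x y) = y" | "tgt (Cmp f g) = tgt f"
| "tgt (Tns f g) = tgt f @ tgt g" | "tgt (Pls f g) = tgt f" | "tgt (Scl c f) = tgt f"
| "tgt (Mg a b) = [Blk (a+b)]" | "tgt (Sp a b) = [Blk a, Blk b]" | "tgt (Cr a b) = [Blk b, Blk a]"
| "tgt (Dt a) = [Blk a]" | "tgt (Up a u) = [Red u, Blk a]" | "tgt (Dn u a) = [Blk a, Red u]"

fun wfm :: "'k tm \<Rightarrow> bool" where
  "wfm (Idt x) = ok_ob x" | "wfm (Zer x y) = (ok_ob x \<and> ok_ob y)"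
| "wfm (Cmp f g) = (wfm f \<and> wfm g \<and> src f = tgt g)"
| "wfm (Tns f g) = (wfm f \<and> wfm g)"
| "wfm (Pls f g) = (wfm f \<and> wfm g \<and> src f = src g \<and> tgt f = tgt g)"
| "wfm (Scl c f) = wfm f"
| "wfm (Mg a b) = (1 \<le> a \<and> 1 \<le> b)" | "wfm (Sp a b) = (1 \<le> a \<and> 1 \<le> b)"
| "wfm (Cr a b) = (1 \<le> a \<and> 1 \<le> b)" | "wfm (Dt a) = (1 \<le> a)"
| "wfm (Up a u) = (1 \<le> a)" | "wfm (Dn u a) = (1 \<le> a)"

lemma hty_iff: "hty f x y \<longleftrightarrow> wfm f \<and> src f = x \<and> tgt f = y"
proof
  assume "hty f x y" then show "wfm f \<and> src f = x \<and> tgt f = y"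
    by (induction rule: hty.induct) auto
next
  assume "wfm f \<and> src f = x \<and> tgt f = y"
  then show "hty f x y"
  proof (induction f arbitrary: x y)
    case (Tns f g) then show ?case using hty.intros(4)[of f "src f" "tgt f" g "src g" "tgt g"] by auto
  qed (auto intro: hty.intros)
qed

lemma AS_eq_ty: "AS_eq x y f g \<Longrightarrow> hty f x y \<and> hty g x y"
  by (induction rule: AS_eq.induct) (auto intro: hty.intros)

definition eqv :: "'k::comm_ring_1 tm \<Rightarrow> 'k tm \<Rightarrow> bool" where
  "eqv f g \<longleftrightarrow> AS_eq (src f) (tgt f) f g"

lemma eqv_D: "eqv f g \<Longrightarrow> wfm f \<and> wfm g \<and> src g = src f \<and> tgt g = tgt f"
  unfolding eqv_def by (drule AS_eq_ty) (simp add: hty_iff)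

lemma eqv_refl: "wfm f \<Longrightarrow> eqv f f"
  unfolding eqv_def by (rule eq_refl) (simp add: hty_iff)

lemma eqv_sym: "eqv f g \<Longrightarrow> eqv g f"
  using eqv_D[of f g] unfolding eqv_def by (auto intro: eq_sym)

lemma eqv_trans[trans]: "eqv f g \<Longrightarrow> eqv g h \<Longrightarrow> eqv f h"
  using eqv_D[of f g] unfolding eqv_def by (auto intro: eq_trans)

lemma eqv_ax: "ax f g \<Longrightarrow> wfm f \<Longrightarrow> wfm g \<Longrightarrow> src g = src f \<Longrightarrow> tgt g = tgt f \<Longrightarrow> eqv f g"
  unfolding eqv_def by (rule eq_ax) (auto simp: hty_iff)

lemma eqv_cmp: "eqv f f' \<Longrightarrow> eqv g g' \<Longrightarrow> src f = tgt g \<Longrightarrow> eqv (Cmp f g) (Cmp f' g')"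
  unfolding eqv_def by (auto intro: eq_cmp)

lemma eqv_tns: "eqv f f' \<Longrightarrow> eqv g g' \<Longrightarrow> eqv (Tns f g) (Tns f' g')"
  unfolding eqv_def by (auto intro: eq_tns)

lemma eqv_pls: "eqv f f' \<Longrightarrow> eqv g g' \<Longrightarrow> src f = src g \<Longrightarrow> tgt f = tgt g \<Longrightarrow> eqv (Pls f g) (Pls f' g')"
  unfolding eqv_def by (auto intro: eq_pls)

lemma eqv_scl: "eqv f f' \<Longrightarrow> eqv (Scl c f) (Scl c f')"
  unfolding eqv_def by (auto intro: eq_scl)

lemma wf_ok: "wfm f \<Longrightarrow> ok_ob (src f) \<and> ok_ob (tgt f)"
  by (induction f) (auto simp: ok_ob_def)

lemma e_assoc: "wfm f \<Longrightarrow> wfm g \<Longrightarrow> wfm h \<Longrightarrow> src f = tgt g \<Longrightarrow> src g = tgt h \<Longrightarrow>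
  eqv (Cmp (Cmp f g) h) (Cmp f (Cmp g h))"
  by (rule eqv_ax[OF ax.c_assoc]) auto

lemma e_idl: "wfm f \<Longrightarrow> tgt f = y \<Longrightarrow> eqv (Cmp (Idt y) f) f"
  using wf_ok[of f] by (intro eqv_ax[OF ax.c_idl]) auto

lemma e_idr: "wfm f \<Longrightarrow> src f = x \<Longrightarrow> eqv (Cmp f (Idt x)) f"
  using wf_ok[of f] by (intro eqv_ax[OF ax.c_idr]) auto

lemma e_tassoc: "wfm f \<Longrightarrow> wfm g \<Longrightarrow> wfm h \<Longrightarrow> eqv (Tns (Tns f g) h) (Tns f (Tns g h))"
  by (rule eqv_ax[OF ax.t_assoc]) auto

lemma e_tunr: "wfm f \<Longrightarrow> eqv (Tns f (Idt [])) f"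
  by (rule eqv_ax[OF ax.t_unr]) (auto simp: ok_ob_def)

lemma e_tid: "ok_ob x \<Longrightarrow> ok_ob y \<Longrightarrow> eqv (Tns (Idt x) (Idt y)) (Idt (x @ y))"
  by (rule eqv_ax[OF ax.t_id]) (auto simp: ok_ob_def)

lemma e_inter: "wfm f \<Longrightarrow> wfm g \<Longrightarrow> wfm h \<Longrightarrow> wfm k \<Longrightarrow> src f = tgt h \<Longrightarrow> src g = tgt k \<Longrightarrow>
  eqv (Cmp (Tns f g) (Tns h k)) (Tns (Cmp f h) (Cmp g k))"
  by (rule eqv_ax[OF ax.t_interchange]) auto

lemma e_cpl: "wfm (Cmp (Pls f g) h) \<Longrightarrow> eqv (Cmp (Pls f g) h) (Pls (Cmp f h) (Cmp g h))"
  by (rule eqv_ax[OF ax.cp_l]) auto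
lemma e_cpr: "wfm (Cmp h (Pls f g)) \<Longrightarrow> eqv (Cmp h (Pls f g)) (Pls (Cmp h f) (Cmp h g))"
  by (rule eqv_ax[OF ax.cp_r]) auto
lemma e_csl: "wfm (Cmp (Scl c f) g) \<Longrightarrow> eqv (Cmp (Scl c f) g) (Scl c (Cmp f g))"
  by (rule eqv_ax[OF ax.cs_l]) auto
lemma e_csr: "wfm (Cmp f (Scl c g)) \<Longrightarrow> eqv (Cmp f (Scl c g)) (Scl c (Cmp f g))"
  by (rule eqv_ax[OF ax.cs_r]) auto
lemma e_tpl: "wfm (Tns (Pls f g) h) \<Longrightarrow> eqv (Tns (Pls f g) h) (Pls (Tns f h) (Tns g h))"
  by (rule eqv_ax[OF ax.tp_l]) auto
lemma e_tpr: "wfm (Tns h (Pls f g)) \<Longrightarrow> eqv (Tns h (Pls f g)) (Pls (Tns h f) (Tns h g))"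
  by (rule eqv_ax[OF ax.tp_r]) auto
lemma e_tsl: "wfm (Tns (Scl c f) g) \<Longrightarrow> eqv (Tns (Scl c f) g) (Scl c (Tns f g))"
  by (rule eqv_ax[OF ax.ts_l]) auto
lemma e_tsr: "wfm (Tns f (Scl c g)) \<Longrightarrow> eqv (Tns f (Scl c g)) (Scl c (Tns f g))"
  by (rule eqv_ax[OF ax.ts_r]) auto
lemma e_sone: "wfm f \<Longrightarrow> eqv (Scl 1 f) f"
  by (rule eqv_ax[OF ax.s_one]) auto

lemma cancel: assumes "eqv (Pls A C) (Pls B C)" shows "eqv A B"
proof -
  have t: "wfm A" "wfm B" "wfm C" "src A = src C" "tgt A = tgt C" "src B = src C" "tgt B = tgt C"
    using eqv_D[OF assms] by auto
  let ?Z = "Zer (src A) (tgt A)"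
  have z: "eqv (Pls C (Scl (-1) C)) ?Z"
    using t wf_ok[of A] by (intro eqv_ax[OF ax.p_neg]) auto
  have "eqv A (Pls A ?Z)"
    using t wf_ok[of A] by (intro eqv_sym[OF eqv_ax[OF ax.p_zero]]) auto
  also have "eqv (Pls A ?Z) (Pls A (Pls C (Scl (-1) C)))"
    by (rule eqv_pls[OF eqv_refl eqv_sym[OF z]]) (use t in auto)
  also have "eqv (Pls A (Pls C (Scl (-1) C))) (Pls (Pls A C) (Scl (-1) C))"
    using t by (intro eqv_sym[OF eqv_ax[OF ax.p_assoc]]) auto
  also have "eqv (Pls (Pls A C) (Scl (-1) C)) (Pls (Pls B C) (Scl (-1) C))"
    by (rule eqv_pls[OF assms eqv_refl]) (use t in auto)
  also have "eqv (Pls (Pls B C) (Scl (-1) C)) (Pls B (Pls C (Scl (-1) C)))"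
    using t by (intro eqv_ax[OF ax.p_assoc]) auto
  also have "eqv (Pls B (Pls C (Scl (-1) C))) (Pls B ?Z)"
    by (rule eqv_pls[OF eqv_refl z]) (use t in auto)
  also have "eqv (Pls B ?Z) B"
    using t wf_ok[of A] by (intro eqv_ax[OF ax.p_zero]) auto
  finally show ?thesis .
qed

definition ic :: "'k::comm_ring_1 tm \<Rightarrow> 'k tm \<Rightarrow> 'k tm \<Rightarrow> 'k tm \<Rightarrow> bool" where
  "ic W F G W' \<longleftrightarrow> eqv (Cmp W F) (Cmp G W')"

lemma ic_D: "ic W F G W' \<Longrightarrow> wfm W \<and> wfm F \<and> wfm G \<and> wfm W' \<and> src W = tgt F \<and> src G = tgt W'
  \<and> src W' = src F \<and> tgt G = tgt W"
  unfolding ic_def by (drule eqv_D) simp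

lemma ic_hcomp: assumes "ic W1 F G W2" "ic W2 F' G' W3" "src F = tgt F'" "src G = tgt G'"
  shows "ic W1 (Cmp F F') (Cmp G G') W3"
proof -
  note t = ic_D[OF assms(1)] ic_D[OF assms(2)] assms(3,4)
  have "eqv (Cmp W1 (Cmp F F')) (Cmp (Cmp W1 F) F')"
    using t by (intro eqv_sym[OF e_assoc]) (simp only: wfm.simps src.simps tgt.simps | metis)+
  also have "eqv (Cmp (Cmp W1 F) F') (Cmp (Cmp G W2) F')"
    by (rule eqv_cmp[OF assms(1)[unfolded ic_def] eqv_refl]) (use t in \<open>(simp only: wfm.simps src.simps tgt.simps | metis)+\<close>)
  also have "eqv (Cmp (Cmp G W2) F') (Cmp G (Cmp W2 F'))"
    using t by (intro e_assoc) (simp only: wfm.simps src.simps tgt.simps | metis)+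
  also have "eqv (Cmp G (Cmp W2 F')) (Cmp G (Cmp G' W3))"
    by (rule eqv_cmp[OF eqv_refl assms(2)[unfolded ic_def]]) (use t in \<open>(simp only: wfm.simps src.simps tgt.simps | metis)+\<close>)
  also have "eqv (Cmp G (Cmp G' W3)) (Cmp (Cmp G G') W3)"
    using t by (intro eqv_sym[OF e_assoc]) (simp only: wfm.simps src.simps tgt.simps | metis)+
  finally show ?thesis unfolding ic_def .
qed

lemma ic_vcomp: assumes "ic V2 F H V2'" "ic V1 H G V1'"
  shows "ic (Cmp V1 V2) F G (Cmp V1' V2')"
proof -
  note t = ic_D[OF assms(1)] ic_D[OF assms(2)]
  have "eqv (Cmp (Cmp V1 V2) F) (Cmp V1 (Cmp V2 F))"
    using t by (intro e_assoc) (simp only: wfm.simps src.simps tgt.simps | metis)+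
  also have "eqv (Cmp V1 (Cmp V2 F)) (Cmp V1 (Cmp H V2'))"
    by (rule eqv_cmp[OF eqv_refl assms(1)[unfolded ic_def]]) (use t in \<open>(simp only: wfm.simps src.simps tgt.simps | metis)+\<close>)
  also have "eqv (Cmp V1 (Cmp H V2')) (Cmp (Cmp V1 H) V2')"
    using t by (intro eqv_sym[OF e_assoc]) (simp only: wfm.simps src.simps tgt.simps | metis)+
  also have "eqv (Cmp (Cmp V1 H) V2') (Cmp (Cmp G V1') V2')"
    by (rule eqv_cmp[OF assms(2)[unfolded ic_def] eqv_refl]) (use t in \<open>(simp only: wfm.simps src.simps tgt.simps | metis)+\<close>)
  also have "eqv (Cmp (Cmp G V1') V2') (Cmp G (Cmp V1' V2'))"
    using t by (intro e_assoc) (simp only: wfm.simps src.simps tgt.simps | metis)+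
  finally show ?thesis unfolding ic_def .
qed

lemma ic_tns: assumes "ic A F G A'" "ic B F' G' B'"
  shows "ic (Tns A B) (Tns F F') (Tns G G') (Tns A' B')"
proof -
  note t = ic_D[OF assms(1)] ic_D[OF assms(2)]
  have "eqv (Cmp (Tns A B) (Tns F F')) (Tns (Cmp A F) (Cmp B F'))"
    using t by (intro e_inter) (simp only: wfm.simps src.simps tgt.simps | metis)+
  also have "eqv (Tns (Cmp A F) (Cmp B F')) (Tns (Cmp G A') (Cmp G' B'))"
    using assms unfolding ic_def by (intro eqv_tns)
  also have "eqv (Tns (Cmp G A') (Cmp G' B')) (Cmp (Tns G G') (Tns A' B'))"
    using t by (intro eqv_sym[OF e_inter]) (simp only: wfm.simps src.simps tgt.simps | metis)+
  finally show ?thesis unfolding ic_def .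
qed

lemma ic_cong: assumes "ic W F G W'" "eqv F F1" "eqv G G1" shows "ic W F1 G1 W'"
proof -
  note t = ic_D[OF assms(1)] eqv_D[OF assms(2)] eqv_D[OF assms(3)]
  have "eqv (Cmp W F1) (Cmp W F)" by (rule eqv_cmp[OF eqv_refl eqv_sym[OF assms(2)]]) (use t in \<open>(simp only: wfm.simps src.simps tgt.simps | metis)+\<close>)
  also have "eqv (Cmp W F) (Cmp G W')" using assms(1) unfolding ic_def .
  also have "eqv (Cmp G W') (Cmp G1 W')" by (rule eqv_cmp[OF assms(3) eqv_refl]) (use t in \<open>(simp only: wfm.simps src.simps tgt.simps | metis)+\<close>)
  finally show ?thesis unfolding ic_def .
qed

lemma ic_id: "wfm W \<Longrightarrow> ic W (Idt (src W)) (Idt (tgt W)) W"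
  unfolding ic_def by (rule eqv_trans[OF e_idr[OF _ refl] eqv_sym[OF e_idl[OF _ refl]]])

lemma ic_idW: "wfm f \<Longrightarrow> src f = x \<Longrightarrow> tgt f = x \<Longrightarrow> ic (Idt x) f f (Idt x)"
  unfolding ic_def by (rule eqv_trans[OF e_idl eqv_sym[OF e_idr]])

lemma ic_pls: assumes "ic W F G W" "ic W F' G' W" shows "ic W (Pls F F') (Pls G G') W"
proof -
  note t = ic_D[OF assms(1)] ic_D[OF assms(2)]
  have "eqv (Cmp W (Pls F F')) (Pls (Cmp W F) (Cmp W F'))" using t by (intro e_cpr) (simp only: wfm.simps src.simps tgt.simps | metis)+
  also have "eqv (Pls (Cmp W F) (Cmp W F')) (Pls (Cmp G W) (Cmp G' W))"
    by (rule eqv_pls[OF assms(1)[unfolded ic_def] assms(2)[unfolded ic_def]]) (use t in \<open>(simp only: wfm.simps src.simps tgt.simps | metis)+\<close>)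
  also have "eqv (Pls (Cmp G W) (Cmp G' W)) (Cmp (Pls G G') W)" using t by (intro eqv_sym[OF e_cpl]) (simp only: wfm.simps src.simps tgt.simps | metis)+
  finally show ?thesis unfolding ic_def .
qed

lemma ic_scl: assumes "ic W F G W" shows "ic W (Scl c F) (Scl c G) W"
proof -
  note t = ic_D[OF assms(1)]
  have "eqv (Cmp W (Scl c F)) (Scl c (Cmp W F))" using t by (intro e_csr) (simp only: wfm.simps src.simps tgt.simps | metis)+
  also have "eqv (Scl c (Cmp W F)) (Scl c (Cmp G W))"
    using assms unfolding ic_def by (intro eqv_scl)
  also have "eqv (Scl c (Cmp G W)) (Cmp (Scl c G) W)" using t by (intro eqv_sym[OF e_csl]) (simp only: wfm.simps src.simps tgt.simps | metis)+
  finally show ?thesis unfolding ic_def .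
qed

lemma ic_cancel: assumes "ic W (Pls F F') (Pls G G') W" "ic W F' G' W" shows "ic W F G W"
proof -
  have e1: "eqv (Cmp W (Pls F F')) (Cmp (Pls G G') W)" using assms(1) unfolding ic_def .
  have w1: "wfm (Cmp W (Pls F F'))" and w2: "wfm (Cmp (Pls G G') W)" using eqv_D[OF e1] by auto
  have "eqv (Pls (Cmp W F) (Cmp W F')) (Cmp W (Pls F F'))" by (rule eqv_sym[OF e_cpr[OF w1]])
  also have "eqv (Cmp W (Pls F F')) (Cmp (Pls G G') W)" by (rule e1)
  also have "eqv (Cmp (Pls G G') W) (Pls (Cmp G W) (Cmp G' W))" by (rule e_cpl[OF w2])
  also have "eqv (Pls (Cmp G W) (Cmp G' W)) (Pls (Cmp G W) (Cmp W F'))"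
    using w2 by (intro eqv_pls[OF eqv_refl eqv_sym[OF assms(2)[unfolded ic_def]]]) auto
  finally show ?thesis unfolding ic_def by (rule cancel)
qed


lemma snoc2: "(t @ [z] = [y, z]) \<longleftrightarrow> t = [y]"
  by (cases t rule: rev_cases) auto

lemma tnsI_cmp: "wfm f \<Longrightarrow> wfm g \<Longrightarrow> src f = tgt g \<Longrightarrow> ok_ob x \<Longrightarrow>
  eqv (Cmp (Tns f (Idt x)) (Tns g (Idt x))) (Tns (Cmp f g) (Idt x))"
  by (rule eqv_trans[OF e_inter eqv_tns[OF eqv_refl e_idl]]) auto

lemma Icmp_tns: "wfm f \<Longrightarrow> wfm g \<Longrightarrow> src f = tgt g \<Longrightarrow> ok_ob x \<Longrightarrow>
  eqv (Cmp (Tns (Idt x) f) (Tns (Idt x) g)) (Tns (Idt x) (Cmp f g))"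
  by (rule eqv_trans[OF e_inter eqv_tns[OF e_idl eqv_refl]]) auto

lemma tsum_ty: "ok_ob x \<Longrightarrow> ok_ob y \<Longrightarrow> (\<forall>f\<in>set fs. wfm f \<and> src f = x \<and> tgt f = y) \<Longrightarrow>
  wfm (tsum x y fs) \<and> src (tsum x y fs) = x \<and> tgt (tsum x y fs) = y"
  by (induction fs) auto

lemma blk_pos[simp]: "1 \<le> a \<Longrightarrow> blk a = [Blk a]"
  by (simp add: blk_def)

lemma ok_blk[simp]: "ok_ob (blk a)"
  by (simp add: blk_def ok_ob_def)

lemma ok_ob_simps[simp]: "ok_ob [] " "ok_ob (Red u # x) = ok_ob x" "ok_ob (Blk a # x) = (a \<noteq> 0 \<and> ok_ob x)"
  "ok_ob (x @ y) = (ok_ob x \<and> ok_ob y)"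
  by (auto simp: ok_ob_def)

lemma omg_ty: "wfm (omg a r) \<and> src (omg a r) = blk a \<and> tgt (omg a r) = blk a"
  by (cases "r = 0"; cases "r = a"; cases "r < a")
     (auto simp: omg_def mg_def sp_def dt_def idb_def blk_def)

lemma gpol_ty: "wfm (gpol r u) \<and> src (gpol r u) = blk r \<and> tgt (gpol r u) = blk r"
  unfolding gpol_def by (rule tsum_ty) (auto simp: omg_ty)

lemma omg_lt: "1 \<le> r \<Longrightarrow> a = r + s \<Longrightarrow> 1 \<le> s \<Longrightarrow>
  omg a r = Cmp (Mg r s) (Cmp (Tns (Dt r) (Idt [Blk s])) (Sp r s))"
  by (simp add: omg_def mg_def sp_def dt_def idb_def)

lemma omg_0: "1 \<le> a \<Longrightarrow> omg a 0 = Idt [Blk a]"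
  by (simp add: omg_def idb_def)

lemma omg_aa: "1 \<le> a \<Longrightarrow> eqv (omg a a) (Dt a)"
proof -
  assume a: "1 \<le> a"
  have "omg a a = Cmp (Idt [Blk a]) (Cmp (Tns (Dt a) (Idt [])) (Idt [Blk a]))"
    using a by (simp add: omg_def mg_def sp_def dt_def idb_def blk_def)
  also have "eqv \<dots> (Cmp (Tns (Dt a) (Idt [])) (Idt [Blk a]))"
    using a by (intro e_idl) auto
  also have "eqv \<dots> (Tns (Dt a) (Idt []))"
    using a by (intro e_idr) auto
  also have "eqv \<dots> (Dt a)"
    using a by (intro e_tunr) auto
  finally show ?thesis .
qed

definition PU :: "'k::comm_ring_1 \<Rightarrow> nat \<Rightarrow> 'k tm \<Rightarrow> bool" where
  "PU u a f \<longleftrightarrow> ic (Up a u) (Tns f (Idt [Red u])) (Tns (Idt [Red u]) f) (Up a u)"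

definition PD :: "'k::comm_ring_1 \<Rightarrow> nat \<Rightarrow> 'k tm \<Rightarrow> bool" where
  "PD u a f \<longleftrightarrow> ic (Dn u a) (Tns (Idt [Red u]) f) (Tns f (Idt [Red u])) (Dn u a)"

lemma PU_D: assumes "PU u a f" shows "1 \<le> a \<and> wfm f \<and> src f = [Blk a] \<and> tgt f = [Blk a]"
proof -
  have h: "eqv (Cmp (Up a u) (Tns f (Idt [Red u]))) (Cmp (Tns (Idt [Red u]) f) (Up a u))"
    using assms unfolding PU_def ic_def .
  have w: "wfm (Cmp (Up a u) (Tns f (Idt [Red u])))" "wfm (Cmp (Tns (Idt [Red u]) f) (Up a u))"
    using eqv_D[OF h] by blast+
  from w(1) have 1: "1 \<le> a" "wfm f" "tgt f @ [Red u] = [Blk a, Red u]" by simp_all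
  from w(2) have 2: "[Red u] @ src f = [Red u, Blk a]" by simp
  from 1 2 show ?thesis by (simp only: snoc2) simp
qed

lemma PD_D: assumes "PD u a f" shows "1 \<le> a \<and> wfm f \<and> src f = [Blk a] \<and> tgt f = [Blk a]"
proof -
  have h: "eqv (Cmp (Dn u a) (Tns (Idt [Red u]) f)) (Cmp (Tns f (Idt [Red u])) (Dn u a))"
    using assms unfolding PD_def ic_def .
  have w: "wfm (Cmp (Dn u a) (Tns (Idt [Red u]) f))" "wfm (Cmp (Tns f (Idt [Red u])) (Dn u a))"
    using eqv_D[OF h] by blast+
  from w(1) have 1: "1 \<le> a" "wfm f" "[Red u] @ tgt f = [Red u, Blk a]" by simp_all
  from w(2) have 2: "src f @ [Red u] = [Blk a, Red u]" by simp
  from 1 2 show ?thesis by (simp only: snoc2) simp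
qed

lemma PU_cong: "PU u a f \<Longrightarrow> eqv f f' \<Longrightarrow> PU u a f'"
  unfolding PU_def
  apply (erule ic_cong)
   apply (rule eqv_tns[OF _ eqv_refl], assumption, simp)
  apply (rule eqv_tns[OF eqv_refl], simp, assumption)
  done

lemma PD_cong: "PD u a f \<Longrightarrow> eqv f f' \<Longrightarrow> PD u a f'"
  unfolding PD_def
  apply (erule ic_cong)
   apply (rule eqv_tns[OF eqv_refl], simp, assumption)
  apply (rule eqv_tns[OF _ eqv_refl], assumption, simp)
  done

lemma PU_pls: assumes "PU u a f" "PU u a g" shows "PU u a (Pls f g)"
proof -
  note t = PU_D[OF assms(1)] PU_D[OF assms(2)]
  have "ic (Up a u) (Pls (Tns f (Idt [Red u])) (Tns g (Idt [Red u])))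
          (Pls (Tns (Idt [Red u]) f) (Tns (Idt [Red u]) g)) (Up a u)"
    using assms unfolding PU_def by (rule ic_pls)
  then show ?thesis unfolding PU_def
    by (rule ic_cong) (rule eqv_sym, use t in \<open>auto intro: e_tpl e_tpr\<close>)+
qed

lemma PD_pls: assumes "PD u a f" "PD u a g" shows "PD u a (Pls f g)"
proof -
  note t = PD_D[OF assms(1)] PD_D[OF assms(2)]
  have "ic (Dn u a) (Pls (Tns (Idt [Red u]) f) (Tns (Idt [Red u]) g))
          (Pls (Tns f (Idt [Red u])) (Tns g (Idt [Red u]))) (Dn u a)"
    using assms unfolding PD_def by (rule ic_pls)
  then show ?thesis unfolding PD_def
    by (rule ic_cong) (rule eqv_sym, use t in \<open>auto intro: e_tpl e_tpr\<close>)+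
qed

lemma PU_scl: assumes "PU u a f" shows "PU u a (Scl c f)"
proof -
  note t = PU_D[OF assms(1)]
  have "ic (Up a u) (Scl c (Tns f (Idt [Red u]))) (Scl c (Tns (Idt [Red u]) f)) (Up a u)"
    using assms unfolding PU_def by (rule ic_scl)
  then show ?thesis unfolding PU_def
    by (rule ic_cong) (rule eqv_sym, use t in \<open>auto intro: e_tsl e_tsr\<close>)+
qed

lemma PD_scl: assumes "PD u a f" shows "PD u a (Scl c f)"
proof -
  note t = PD_D[OF assms(1)]
  have "ic (Dn u a) (Scl c (Tns (Idt [Red u]) f)) (Scl c (Tns f (Idt [Red u]))) (Dn u a)"
    using assms unfolding PD_def by (rule ic_scl)
  then show ?thesis unfolding PD_def
    by (rule ic_cong) (rule eqv_sym, use t in \<open>auto intro: e_tsl e_tsr\<close>)+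
qed

lemma PU_cancel: assumes "PU u a (Pls f g)" "PU u a g" shows "PU u a f"
proof -
  note t = PU_D[OF assms(1)] PU_D[OF assms(2)]
  have "ic (Up a u) (Pls (Tns f (Idt [Red u])) (Tns g (Idt [Red u])))
          (Pls (Tns (Idt [Red u]) f) (Tns (Idt [Red u]) g)) (Up a u)"
    using assms(1) unfolding PU_def
    by (rule ic_cong) (use t in \<open>auto intro: e_tpl e_tpr\<close>)
  then show ?thesis using assms(2) unfolding PU_def by (rule ic_cancel)
qed

lemma PD_cancel: assumes "PD u a (Pls f g)" "PD u a g" shows "PD u a f"
proof -
  note t = PD_D[OF assms(1)] PD_D[OF assms(2)]
  have "ic (Dn u a) (Pls (Tns (Idt [Red u]) f) (Tns (Idt [Red u]) g))
          (Pls (Tns f (Idt [Red u])) (Tns g (Idt [Red u]))) (Dn u a)"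
    using assms(1) unfolding PD_def
    by (rule ic_cong) (use t in \<open>auto intro: e_tpl e_tpr\<close>)
  then show ?thesis using assms(2) unfolding PD_def by (rule ic_cancel)
qed

lemma PU_id: assumes a: "1 \<le> a" shows "PU u a (Idt [Blk a])"
proof -
  have i: "ic (Up a u) (Idt [Blk a, Red u]) (Idt [Red u, Blk a]) (Up a u)" using ic_id[of "Up a u"] a by simp
  have e1: "eqv (Idt [Blk a, Red u]) (Tns (Idt [Blk a]) (Idt [Red u]))" using eqv_sym[OF e_tid[of "[Blk a]" "[Red u]"]] a by simp
  have e2: "eqv (Idt [Red u, Blk a]) (Tns (Idt [Red u]) (Idt [Blk a]))" using eqv_sym[OF e_tid[of "[Red u]" "[Blk a]"]] a by simp
  show ?thesis unfolding PU_def by (rule ic_cong[OF i e1 e2])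
qed

lemma PD_id: assumes a: "1 \<le> a" shows "PD u a (Idt [Blk a])"
proof -
  have i: "ic (Dn u a) (Idt [Red u, Blk a]) (Idt [Blk a, Red u]) (Dn u a)" using ic_id[of "Dn u a"] a by simp
  have e1: "eqv (Idt [Red u, Blk a]) (Tns (Idt [Red u]) (Idt [Blk a]))" using eqv_sym[OF e_tid[of "[Red u]" "[Blk a]"]] a by simp
  have e2: "eqv (Idt [Blk a, Red u]) (Tns (Idt [Blk a]) (Idt [Red u]))" using eqv_sym[OF e_tid[of "[Blk a]" "[Red u]"]] a by simp
  show ?thesis unfolding PD_def by (rule ic_cong[OF i e1 e2])
qed


lemma PU_zer: assumes "1 \<le> a" shows "PU u a (Zer [Blk a] [Blk a])"
proof -
  have "PU u a (Pls (Idt [Blk a]) (Scl (-1) (Idt [Blk a])))"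
    using assms by (intro PU_pls PU_scl PU_id)
  then show ?thesis by (rule PU_cong) (rule eqv_ax[OF ax.p_neg], use assms in auto)
qed

lemma PD_zer: assumes "1 \<le> a" shows "PD u a (Zer [Blk a] [Blk a])"
proof -
  have "PD u a (Pls (Idt [Blk a]) (Scl (-1) (Idt [Blk a])))"
    using assms by (intro PD_pls PD_scl PD_id)
  then show ?thesis by (rule PD_cong) (rule eqv_ax[OF ax.p_neg], use assms in auto)
qed

lemma PU_tsum: "1 \<le> a \<Longrightarrow> (\<forall>f\<in>set fs. PU u a f) \<Longrightarrow> PU u a (tsum [Blk a] [Blk a] fs)"
  by (induction fs) (auto intro: PU_zer PU_pls)

lemma PD_tsum: "1 \<le> a \<Longrightarrow> (\<forall>f\<in>set fs. PD u a f) \<Longrightarrow> PD u a (tsum [Blk a] [Blk a] fs)"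
  by (induction fs) (auto intro: PD_zer PD_pls)

lemma PU_gpol: assumes a: "1 \<le> a" shows "PU u a (gpol a u)"
proof -
  note g = gpol_ty[of a u]
  let ?U = "Up a u" and ?D = "Dn u a" and ?I = "Idt [Red u]" and ?g = "gpol a u"
  have r7a: "eqv (Cmp ?D ?U) (Tns ?g ?I)"
    using a g by (intro eqv_ax[OF ax.R7a[unfolded idr_def]]) auto
  have r7b: "eqv (Cmp ?U ?D) (Tns ?I ?g)"
    using a g by (intro eqv_ax[OF ax.R7b[unfolded idr_def]]) auto
  have "eqv (Cmp ?U (Tns ?g ?I)) (Cmp ?U (Cmp ?D ?U))"
    using a g by (intro eqv_cmp[OF eqv_refl eqv_sym[OF r7a]]) auto
  also have "eqv (Cmp ?U (Cmp ?D ?U)) (Cmp (Cmp ?U ?D) ?U)"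
    using a by (intro eqv_sym[OF e_assoc]) auto
  also have "eqv (Cmp (Cmp ?U ?D) ?U) (Cmp (Tns ?I ?g) ?U)"
    using a by (intro eqv_cmp[OF r7b eqv_refl]) auto
  finally show ?thesis unfolding PU_def ic_def .
qed

lemma PD_gpol: assumes a: "1 \<le> a" shows "PD u a (gpol a u)"
proof -
  note g = gpol_ty[of a u]
  let ?U = "Up a u" and ?D = "Dn u a" and ?I = "Idt [Red u]" and ?g = "gpol a u"
  have r7a: "eqv (Cmp ?D ?U) (Tns ?g ?I)"
    using a g by (intro eqv_ax[OF ax.R7a[unfolded idr_def]]) auto
  have r7b: "eqv (Cmp ?U ?D) (Tns ?I ?g)"
    using a g by (intro eqv_ax[OF ax.R7b[unfolded idr_def]]) auto
  have "eqv (Cmp ?D (Tns ?I ?g)) (Cmp ?D (Cmp ?U ?D))"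
    using a g by (intro eqv_cmp[OF eqv_refl eqv_sym[OF r7b]]) auto
  also have "eqv (Cmp ?D (Cmp ?U ?D)) (Cmp (Cmp ?D ?U) ?D)"
    using a by (intro eqv_sym[OF e_assoc]) auto
  also have "eqv (Cmp (Cmp ?D ?U) ?D) (Cmp (Tns ?g ?I) ?D)"
    using a by (intro eqv_cmp[OF r7a eqv_refl]) auto
  finally show ?thesis unfolding PD_def ic_def .
qed


lemma WI_eq: "1 \<le> r \<Longrightarrow> 1 \<le> s \<Longrightarrow>
  eqv (Tns (Tns (Dt r) (Idt [Blk s])) (Idt [Red u])) (Tns (Dt r) (Idt [Blk s, Red u]))"
proof -
  assume a: "1 \<le> r" "1 \<le> s"
  have "eqv (Tns (Tns (Dt r) (Idt [Blk s])) (Idt [Red u])) (Tns (Dt r) (Tns (Idt [Blk s]) (Idt [Red u])))"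
    using a by (intro e_tassoc) auto
  also have "eqv \<dots> (Tns (Dt r) (Idt [Blk s, Red u]))"
    using a eqv_tns[OF eqv_refl[of "Dt r"] e_tid[of "[Blk s]" "[Red u]"]] by simp
  finally show ?thesis .
qed

lemma H_eq: "1 \<le> r \<Longrightarrow> 1 \<le> s \<Longrightarrow>
  eqv (Tns (Tns (Dt r) (Idt [Red u])) (Idt [Blk s])) (Tns (Dt r) (Idt [Red u, Blk s]))"
proof -
  assume a: "1 \<le> r" "1 \<le> s"
  have "eqv (Tns (Tns (Dt r) (Idt [Red u])) (Idt [Blk s])) (Tns (Dt r) (Tns (Idt [Red u]) (Idt [Blk s])))"
    using a by (intro e_tassoc) auto
  also have "eqv \<dots> (Tns (Dt r) (Idt [Red u, Blk s]))"
    using a eqv_tns[OF eqv_refl[of "Dt r"] e_tid[of "[Red u]" "[Blk s]"]] by simp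
  finally show ?thesis .
qed

lemma PU_L1: assumes r: "1 \<le> r" "r < a" and ih: "PU u r (Dt r)" shows "PU u a (omg a r)"
proof -
  define s where "s = a - r"
  have s: "a = r + s" "1 \<le> s" using r unfolding s_def by auto
  let ?I = "Idt [Red u]" and ?M = "Mg r s" and ?S = "Sp r s" and ?W = "Tns (Dt r) (Idt [Blk s])"
  let ?Ua = "Up (r+s) u" and ?Ur = "Up r u" and ?Us = "Up s u"
  let ?V1 = "Tns ?Ur (Idt [Blk s])" and ?V2 = "Tns (Idt [Blk r]) ?Us"
  let ?H = "Tns (Dt r) (Idt [Red u, Blk s])"
  have A: "ic ?Ua (Tns ?M ?I) (Tns ?I ?M) (Cmp ?V1 ?V2)"
    unfolding ic_def using r s by (intro eqv_ax[OF ax.R9d[unfolded idr_def]]) auto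
  have C: "ic (Cmp ?V1 ?V2) (Tns ?S ?I) (Tns ?I ?S) ?Ua"
  proof -
    have "eqv (Cmp (Cmp ?V1 ?V2) (Tns ?S ?I)) (Cmp ?V1 (Cmp ?V2 (Tns ?S ?I)))"
      using r s by (intro e_assoc) auto
    also have "eqv \<dots> (Cmp (Tns ?I ?S) ?Ua)"
      using r s by (intro eqv_sym[OF eqv_ax[OF ax.R9a[unfolded idr_def]]]) auto
    finally show ?thesis unfolding ic_def .
  qed
  have B1: "ic ?V2 (Tns ?W ?I) ?H ?V2"
  proof -
    have i: "ic ?V2 (Tns (Dt r) (Idt [Blk s, Red u])) ?H ?V2"
      using ic_tns[OF ic_idW[of "Dt r" "[Blk r]"] ic_id[of "?Us"]] r s by simp
    show ?thesis by (rule ic_cong[OF i eqv_sym[OF WI_eq] eqv_refl]) (use r s in simp_all)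
  qed
  have B2: "ic ?V1 ?H (Tns ?I ?W) ?V1"
  proof -
    have i: "ic ?V1 (Tns (Tns (Dt r) ?I) (Idt [Blk s])) (Tns (Tns ?I (Dt r)) (Idt [Blk s])) ?V1"
      using ic_tns[OF ih[unfolded PU_def] ic_idW[of "Idt [Blk s]" "[Blk s]"]] s by simp
    have e2: "eqv (Tns (Tns ?I (Dt r)) (Idt [Blk s])) (Tns ?I ?W)"
      using r s by (intro e_tassoc) auto
    show ?thesis by (rule ic_cong[OF i H_eq e2]) (use r s in simp_all)
  qed
  have B: "ic (Cmp ?V1 ?V2) (Tns ?W ?I) (Tns ?I ?W) (Cmp ?V1 ?V2)"
    by (rule ic_vcomp[OF B1 B2])
  have BC: "ic (Cmp ?V1 ?V2) (Cmp (Tns ?W ?I) (Tns ?S ?I)) (Cmp (Tns ?I ?W) (Tns ?I ?S)) ?Ua"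
    by (rule ic_hcomp[OF B C]) simp_all
  have ABC: "ic ?Ua (Cmp (Tns ?M ?I) (Cmp (Tns ?W ?I) (Tns ?S ?I)))
                    (Cmp (Tns ?I ?M) (Cmp (Tns ?I ?W) (Tns ?I ?S))) ?Ua"
    by (rule ic_hcomp[OF A BC]) simp_all
  have eF: "eqv (Cmp (Tns ?M ?I) (Cmp (Tns ?W ?I) (Tns ?S ?I))) (Tns (Cmp ?M (Cmp ?W ?S)) ?I)"
  proof -
    have "eqv (Cmp (Tns ?M ?I) (Cmp (Tns ?W ?I) (Tns ?S ?I))) (Cmp (Tns ?M ?I) (Tns (Cmp ?W ?S) ?I))"
      using r s by (intro eqv_cmp[OF eqv_refl tnsI_cmp]) auto
    also have "eqv \<dots> (Tns (Cmp ?M (Cmp ?W ?S)) ?I)"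
      using r s by (intro tnsI_cmp) auto
    finally show ?thesis .
  qed
  have eG: "eqv (Cmp (Tns ?I ?M) (Cmp (Tns ?I ?W) (Tns ?I ?S))) (Tns ?I (Cmp ?M (Cmp ?W ?S)))"
  proof -
    have "eqv (Cmp (Tns ?I ?M) (Cmp (Tns ?I ?W) (Tns ?I ?S))) (Cmp (Tns ?I ?M) (Tns ?I (Cmp ?W ?S)))"
      using r s by (intro eqv_cmp[OF eqv_refl Icmp_tns]) auto
    also have "eqv \<dots> (Tns ?I (Cmp ?M (Cmp ?W ?S)))"
      using r s by (intro Icmp_tns) auto
    finally show ?thesis .
  qed
  have "PU u (r+s) (Cmp ?M (Cmp ?W ?S))" unfolding PU_def by (rule ic_cong[OF ABC eF eG])
  then have "PU u (r+s) (omg (r+s) r)" by (simp only: omg_lt[OF r(1) refl s(2)])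
  then show ?thesis using s(1) by simp
qed

lemma PD_L1: assumes r: "1 \<le> r" "r < a" and ih: "PD u r (Dt r)" shows "PD u a (omg a r)"
proof -
  define s where "s = a - r"
  have s: "a = r + s" "1 \<le> s" using r unfolding s_def by auto
  let ?I = "Idt [Red u]" and ?M = "Mg r s" and ?S = "Sp r s" and ?W = "Tns (Dt r) (Idt [Blk s])"
  let ?Da = "Dn u (r+s)" and ?Dr = "Dn u r" and ?Ds = "Dn u s"
  let ?V1 = "Tns (Idt [Blk r]) ?Ds" and ?V2 = "Tns ?Dr (Idt [Blk s])"
  let ?H = "Tns (Dt r) (Idt [Red u, Blk s])"
  have A: "ic ?Da (Tns ?I ?M) (Tns ?M ?I) (Cmp ?V1 ?V2)"
    unfolding ic_def using r s by (intro eqv_ax[OF ax.R9c[unfolded idr_def]]) auto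
  have C: "ic (Cmp ?V1 ?V2) (Tns ?I ?S) (Tns ?S ?I) ?Da"
  proof -
    have "eqv (Cmp (Cmp ?V1 ?V2) (Tns ?I ?S)) (Cmp ?V1 (Cmp ?V2 (Tns ?I ?S)))"
      using r s by (intro e_assoc) auto
    also have "eqv \<dots> (Cmp (Tns ?S ?I) ?Da)"
      using r s by (intro eqv_sym[OF eqv_ax[OF ax.R9b[unfolded idr_def]]]) auto
    finally show ?thesis unfolding ic_def .
  qed
  have B1: "ic ?V2 (Tns ?I ?W) ?H ?V2"
  proof -
    have i: "ic ?V2 (Tns (Tns ?I (Dt r)) (Idt [Blk s])) (Tns (Tns (Dt r) ?I) (Idt [Blk s])) ?V2"
      using ic_tns[OF ih[unfolded PD_def] ic_idW[of "Idt [Blk s]" "[Blk s]"]] s by simp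
    have e1: "eqv (Tns (Tns ?I (Dt r)) (Idt [Blk s])) (Tns ?I ?W)"
      using r s by (intro e_tassoc) auto
    show ?thesis by (rule ic_cong[OF i e1 H_eq]) (use r s in simp_all)
  qed
  have B2: "ic ?V1 ?H (Tns ?W ?I) ?V1"
  proof -
    have i: "ic ?V1 ?H (Tns (Dt r) (Idt [Blk s, Red u])) ?V1"
      using ic_tns[OF ic_idW[of "Dt r" "[Blk r]"] ic_id[of "?Ds"]] r s by simp
    show ?thesis by (rule ic_cong[OF i eqv_refl eqv_sym[OF WI_eq]]) (use r s in simp_all)
  qed
  have B: "ic (Cmp ?V1 ?V2) (Tns ?I ?W) (Tns ?W ?I) (Cmp ?V1 ?V2)"
    by (rule ic_vcomp[OF B1 B2])
  have BC: "ic (Cmp ?V1 ?V2) (Cmp (Tns ?I ?W) (Tns ?I ?S)) (Cmp (Tns ?W ?I) (Tns ?S ?I)) ?Da"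
    by (rule ic_hcomp[OF B C]) simp_all
  have ABC: "ic ?Da (Cmp (Tns ?I ?M) (Cmp (Tns ?I ?W) (Tns ?I ?S)))
                    (Cmp (Tns ?M ?I) (Cmp (Tns ?W ?I) (Tns ?S ?I))) ?Da"
    by (rule ic_hcomp[OF A BC]) simp_all
  have eF: "eqv (Cmp (Tns ?M ?I) (Cmp (Tns ?W ?I) (Tns ?S ?I))) (Tns (Cmp ?M (Cmp ?W ?S)) ?I)"
  proof -
    have "eqv (Cmp (Tns ?M ?I) (Cmp (Tns ?W ?I) (Tns ?S ?I))) (Cmp (Tns ?M ?I) (Tns (Cmp ?W ?S) ?I))"
      using r s by (intro eqv_cmp[OF eqv_refl tnsI_cmp]) auto
    also have "eqv \<dots> (Tns (Cmp ?M (Cmp ?W ?S)) ?I)"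
      using r s by (intro tnsI_cmp) auto
    finally show ?thesis .
  qed
  have eG: "eqv (Cmp (Tns ?I ?M) (Cmp (Tns ?I ?W) (Tns ?I ?S))) (Tns ?I (Cmp ?M (Cmp ?W ?S)))"
  proof -
    have "eqv (Cmp (Tns ?I ?M) (Cmp (Tns ?I ?W) (Tns ?I ?S))) (Cmp (Tns ?I ?M) (Tns ?I (Cmp ?W ?S)))"
      using r s by (intro eqv_cmp[OF eqv_refl Icmp_tns]) auto
    also have "eqv \<dots> (Tns ?I (Cmp ?M (Cmp ?W ?S)))"
      using r s by (intro Icmp_tns) auto
    finally show ?thesis .
  qed
  have "PD u (r+s) (Cmp ?M (Cmp ?W ?S))" unfolding PD_def by (rule ic_cong[OF ABC eG eF])
  then have "PD u (r+s) (omg (r+s) r)" by (simp only: omg_lt[OF r(1) refl s(2)])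
  then show ?thesis using s(1) by simp
qed


lemma gpol_split: "1 \<le> a \<Longrightarrow> gpol a u = Pls (Scl 1 (omg a a))
   (tsum [Blk a] [Blk a] (map (\<lambda>i. Scl ((-1)^i * (\<Prod>j<i. u + of_nat j)) (omg a (a-i))) [1..<a+1]))"
  unfolding gpol_def by (simp add: upt_conv_Cons del: upt_Suc)

lemma PU_Dt: "1 \<le> a \<Longrightarrow> PU u a (Dt a)"
proof (induction a rule: less_induct)
  case (less a)
  have lt: "PU u a (omg a r)" if "r < a" for r
  proof (cases "r = 0")
    case True then show ?thesis using less.prems PU_id by (simp add: omg_0)
  next
    case False then show ?thesis using that less by (intro PU_L1) auto
  qed
  have T: "PU u a (tsum [Blk a] [Blk a]
      (map (\<lambda>i. Scl ((-1)^i * (\<Prod>j<i. u + of_nat j)) (omg a (a-i))) [1..<a+1]))"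
    by (rule PU_tsum) (use less.prems lt in \<open>auto intro: PU_scl\<close>)
  have "PU u a (gpol a u)" using less.prems by (rule PU_gpol)
  then have "PU u a (Scl 1 (omg a a))" using T less.prems
    by (auto simp: gpol_split intro: PU_cancel)
  then have "PU u a (omg a a)" by (rule PU_cong) (rule e_sone, simp add: omg_ty)
  then show ?case by (rule PU_cong) (rule omg_aa, rule less.prems)
qed

lemma PD_Dt: "1 \<le> a \<Longrightarrow> PD u a (Dt a)"
proof (induction a rule: less_induct)
  case (less a)
  have lt: "PD u a (omg a r)" if "r < a" for r
  proof (cases "r = 0")
    case True then show ?thesis using less.prems PD_id by (simp add: omg_0)
  next
    case False then show ?thesis using that less by (intro PD_L1) auto
  qed
  have T: "PD u a (tsum [Blk a] [Blk a]
      (map (\<lambda>i. Scl ((-1)^i * (\<Prod>j<i. u + of_nat j)) (omg a (a-i))) [1..<a+1]))"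
    by (rule PD_tsum) (use less.prems lt in \<open>auto intro: PD_scl\<close>)
  have "PD u a (gpol a u)" using less.prems by (rule PD_gpol)
  then have "PD u a (Scl 1 (omg a a))" using T less.prems
    by (auto simp: gpol_split intro: PD_cancel)
  then have "PD u a (omg a a)" by (rule PD_cong) (rule e_sone, simp add: omg_ty)
  then show ?case by (rule PD_cong) (rule omg_aa, rule less.prems)
qed

theorem lemma3p5:
  fixes a r :: nat and u :: "'k::comm_ring_1"
  assumes "a \<ge> 1" and "r \<le> a"
  shows "AS_eq [Blk a, Red u] [Red u, Blk a]
           (Cmp (Up a u) (Tns (omg a r) (idr u)))
           (Cmp (Tns (idr u) (omg a r)) (Up a u))
       \<and> AS_eq [Red u, Blk a] [Blk a, Red u]
           (Cmp (Dn u a) (Tns (idr u) (omg a r)))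
           (Cmp (Tns (omg a r) (idr u)) (Dn u a))"
proof -
  have U: "PU u a (omg a r)"
  proof (cases "r = 0")
    case True then show ?thesis using assms PU_id by (simp add: omg_0)
  next
    case False
    show ?thesis
    proof (cases "r < a")
      case True then show ?thesis using False assms by (intro PU_L1 PU_Dt) auto
    next
      case f2: False
      then have "r = a" using assms by simp
      then show ?thesis using assms PU_cong[OF PU_Dt eqv_sym[OF omg_aa]] by simp
    qed
  qed
  have D: "PD u a (omg a r)"
  proof (cases "r = 0")
    case True then show ?thesis using assms PD_id by (simp add: omg_0)
  next
    case False
    show ?thesis
    proof (cases "r < a")
      case True then show ?thesis using False assms by (intro PD_L1 PD_Dt) auto
    next
      case f2: False
      then have "r = a" using assms by simp
      then show ?thesis using assms PD_cong[OF PD_Dt eqv_sym[OF omg_aa]] by simp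
    qed
  qed
  have ty: "src (omg a r :: 'k tm) = [Blk a]" using assms by (simp add: omg_ty)
  show ?thesis using U D ty unfolding PU_def PD_def ic_def eqv_def idr_def by simp
qed

end
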